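(* Let $H$ be the 28-element set $H=\{n_M : n\in\mathbb{Z}_{12}\}\cup\{n_m : n\in\mathbb{Z}_{12}\}\cup\{n_{\mathrm{aug}} : n\in\{0,1,2,3\}\}$, and let $\mathcal{T}$ be the symmetric relation on $H$ consisting exactly of the pairs $(n_M,(n+4)_M)$, $(n_M,(n+8)_M)$, $(n_M,(n+1)_m)$, $(n_M,(n+5)_m)$, $(n_M,((n+3)\bmod 4)_{\mathrm{aug}})$, $(n_m,(n+4)_m)$, $(n_m,(n+8)_m)$, $(n_m,(n+11)_M)$, $(n_m,(n+7)_M)$, $(n_m,(n\bmod 4)_{\mathrm{aug}})$ for $n\in\mathbb{Z}_{12}$, together with the reverses of all these pairs. Then the monoid $M_{\mathcal{T}}$ of relations on $H$ generated by $\mathcal{T}$ under composition of relations has the presentation $M_{\mathcal{T}}=\langle \mathcal{T}\mid \mathcal{T}^4=\mathcal{T}^3\rangle$.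
   Context: Indices $n$ of $n_M,n_m$ are taken modulo 12; the elements of $H$ are formal labels (musically: $n_M=\{n,n+4,n+7\}$, $n_m=\{n,n+3,n+7\}$, $k_{\mathrm{aug}}=\{k,k+4,k+8\}$ in $\mathbb{Z}_{12}$; $\mathcal{T}$ is Douthett's relation $\mathcal{P}_{2,0}$). Composition of relations: $\mathcal{R}'\mathcal{R}$ is the set of pairs $(x,z)$ such that there exists $y$ with $(x,y)\in\mathcal{R}$ and $(y,z)\in\mathcal{R}'$; the monoid identity is the identity relation on $H$. *)

theory Defs
  imports Main
begin

datatype chord = Maj int | Min int | Aug int

definition H :: "chord set" where
  "H = {Maj n | n. 0 \<le> n \<and> n < 12} \<union> {Min n | n. 0 \<le> n \<and> n < 12}
       \<union> {Aug n | n. 0 \<le> n \<and> n < 4}"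

definition T0 :: "chord rel" where
  "T0 = (\<Union>n\<in>{0..<12::int}.
     {(Maj n, Maj ((n+4) mod 12)), (Maj n, Maj ((n+8) mod 12)),
      (Maj n, Min ((n+1) mod 12)), (Maj n, Min ((n+5) mod 12)),
      (Maj n, Aug ((n+3) mod 4)),
      (Min n, Min ((n+4) mod 12)), (Min n, Min ((n+8) mod 12)),
      (Min n, Maj ((n+11) mod 12)), (Min n, Maj ((n+7) mod 12)),
      (Min n, Aug (n mod 4))})"

definition T :: "chord rel" where
  "T = T0 \<union> T0\<inverse>"

text \<open>Powers in the monoid of relations on H: identity is Id_on H, and
  the composition R'R of the paper is R O R' in Isabelle.\<close>
fun hpow :: "chord rel \<Rightarrow> nat \<Rightarrow> chord rel" where
  "hpow R 0 = Id_on H"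
| "hpow R (Suc k) = hpow R k O R"

inductive_set gen_monoid :: "chord rel set \<Rightarrow> chord rel set" for G where
  gm_id: "Id_on H \<in> gen_monoid G"
| gm_gen: "R \<in> G \<Longrightarrow> R \<in> gen_monoid G"
| gm_comp: "A \<in> gen_monoid G \<Longrightarrow> B \<in> gen_monoid G \<Longrightarrow> A O B \<in> gen_monoid G"

end

theory Submission
  imports Defs
begin

definition TL0 :: "(chord \<times> chord) list" where
  "TL0 = concat (map (\<lambda>n.
     [(Maj n, Maj ((n+4) mod 12)), (Maj n, Maj ((n+8) mod 12)),
      (Maj n, Min ((n+1) mod 12)), (Maj n, Min ((n+5) mod 12)),
      (Maj n, Aug ((n+3) mod 4)),
      (Min n, Min ((n+4) mod 12)), (Min n, Min ((n+8) mod 12)),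
      (Min n, Maj ((n+11) mod 12)), (Min n, Maj ((n+7) mod 12)),
      (Min n, Aug (n mod 4))]) [0..11])"

lemma T0_eq: "T0 = set TL0"
proof -
  have e: "{0..<12::int} = set [0..11]" by auto
  show ?thesis unfolding T0_def TL0_def e set_concat set_map image_comp
    by (simp only: o_def list.set)
qed

definition TL :: "(chord \<times> chord) list" where "TL = TL0 @ map prod.swap TL0"

lemma T_eq: "T = set TL" unfolding T_def TL_def T0_eq by auto

lemma T_img0: "T `` {x} = set (map snd (filter (\<lambda>p. fst p = x) TL))"
  unfolding T_eq by force

lemma TL_lit: "TL = [(Maj 0, Maj 4), (Maj 0, Maj 8), (Maj 0, Min 1), (Maj 0, Min 5), (Maj 0, Aug 3), (Min 0, Min 4), (Min 0, Min 8), (Min 0, Maj 11), (Min 0, Maj 7), (Min 0, Aug 0), (Maj 1, Maj 5), (Maj 1, Maj 9), (Maj 1, Min 2), (Maj 1, Min 6), (Maj 1, Aug 0), (Min 1, Min 5), (Min 1, Min 9), (Min 1, Maj 0), (Min 1, Maj 8), (Min 1, Aug 1), (Maj 2, Maj 6), (Maj 2, Maj 10), (Maj 2, Min 3), (Maj 2, Min 7), (Maj 2, Aug 1), (Min 2, Min 6), (Min 2, Min 10), (Min 2, Maj 1), (Min 2, Maj 9), (Min 2, Aug 2), (Maj 3, Maj 7), (Maj 3, Maj 11), (Maj 3, Min 4), (Maj 3, Min 8), (Maj 3, Aug 2), (Min 3, Min 7), (Min 3, Min 11), (Min 3, Maj 2), (Min 3, Maj 10), (Min 3, Aug 3), (Maj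 4, Maj 8), (Maj 4, Maj 0), (Maj 4, Min 5), (Maj 4, Min 9), (Maj 4, Aug 3), (Min 4, Min 8), (Min 4, Min 0), (Min 4, Maj 3), (Min 4, Maj 11), (Min 4, Aug 0), (Maj 5, Maj 9), (Maj 5, Maj 1), (Maj 5, Min 6), (Maj 5, Min 10), (Maj 5, Aug 0), (Min 5, Min 9), (Min 5, Min 1), (Min 5, Maj 4), (Min 5, Maj 0), (Min 5, Aug 1), (Maj 6, Maj 10), (Maj 6, Maj 2), (Maj 6, Min 7), (Maj 6, Min 11), (Maj 6, Aug 1), (Min 6, Min 10), (Min 6, Min 2), (Min 6, Maj 5), (Min 6, Maj 1), (Min 6, Aug 2), (Maj 7, Maj 11), (Maj 7, Maj 3), (Maj 7, Min 8), (Maj 7, Min 0), (Maj 7, Aug 2), (Min 7, Min 11), (Min 7, Min 3), (Min 7, Maj 6), (Min 7, Maj 2), (Min 7, Aug 3), (Maj 8, Maj 0), (Maj 8, Maj 4), (Maj 8, Min 9), (Maj 8, Min 1), (Maj 8, Aug 3), (Min 8, Min 0), (Min 8, Min 4), (Min 8, Maj 7), (Min 8, Maj 3), (Min 8, Aug 0), (Maj 9, Maj 1), (Maj 9, Maj 5), (Maj 9, Min 10), (Maj 9, Min 2), (Maj 9, Aug 0), (Min 9, Min 1), (Min 9, Min 5), (Min 9, Maj 8), (Min 9, Maj 4), (Min 9, Aug 1), (Maj 10, Maj 2), (Maj 10, Maj 6), (Maj 10, Min 11), (Maj 10, Min 3), (Maj 10, Aug 1), (Min 10, Min 2), (Min 10,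 Min 6), (Min 10, Maj 9), (Min 10, Maj 5), (Min 10, Aug 2), (Maj 11, Maj 3), (Maj 11, Maj 7), (Maj 11, Min 0), (Maj 11, Min 4), (Maj 11, Aug 2), (Min 11, Min 3), (Min 11, Min 7), (Min 11, Maj 10), (Min 11, Maj 6), (Min 11, Aug 3), (Maj 4, Maj 0), (Maj 8, Maj 0), (Min 1, Maj 0), (Min 5, Maj 0), (Aug 3, Maj 0), (Min 4, Min 0), (Min 8, Min 0), (Maj 11, Min 0), (Maj 7, Min 0), (Aug 0, Min 0), (Maj 5, Maj 1), (Maj 9, Maj 1), (Min 2, Maj 1), (Min 6, Maj 1), (Aug 0, Maj 1), (Min 5, Min 1), (Min 9, Min 1), (Maj 0, Min 1), (Maj 8, Min 1), (Aug 1, Min 1), (Maj 6, Maj 2), (Maj 10, Maj 2), (Min 3, Maj 2), (Min 7, Maj 2), (Aug 1, Maj 2), (Min 6, Min 2), (Min 10, Min 2), (Maj 1, Min 2), (Maj 9, Min 2), (Aug 2, Min 2), (Maj 7, Maj 3), (Maj 11, Maj 3), (Min 4, Maj 3), (Min 8, Maj 3), (Aug 2, Maj 3), (Min 7, Min 3), (Min 11, Min 3), (Maj 2, Min 3), (Maj 10, Min 3), (Aug 3, Min 3), (Maj 8, Maj 4), (Maj 0, Maj 4), (Min 5, Maj 4), (Min 9, Maj 4), (Aug 3, Maj 4), (Min 8, Min 4), (Min 0, Min 4), (Maj 3, Min 4), (Maj 11, Min 4), (Aug 0, Min 4), (Maj 9, Maj 5), (Maj 1, Maj 5), (Min 6,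 Maj 5), (Min 10, Maj 5), (Aug 0, Maj 5), (Min 9, Min 5), (Min 1, Min 5), (Maj 4, Min 5), (Maj 0, Min 5), (Aug 1, Min 5), (Maj 10, Maj 6), (Maj 2, Maj 6), (Min 7, Maj 6), (Min 11, Maj 6), (Aug 1, Maj 6), (Min 10, Min 6), (Min 2, Min 6), (Maj 5, Min 6), (Maj 1, Min 6), (Aug 2, Min 6), (Maj 11, Maj 7), (Maj 3, Maj 7), (Min 8, Maj 7), (Min 0, Maj 7), (Aug 2, Maj 7), (Min 11, Min 7), (Min 3, Min 7), (Maj 6, Min 7), (Maj 2, Min 7), (Aug 3, Min 7), (Maj 0, Maj 8), (Maj 4, Maj 8), (Min 9, Maj 8), (Min 1, Maj 8), (Aug 3, Maj 8), (Min 0, Min 8), (Min 4, Min 8), (Maj 7, Min 8), (Maj 3, Min 8), (Aug 0, Min 8), (Maj 1, Maj 9), (Maj 5, Maj 9), (Min 10, Maj 9), (Min 2, Maj 9), (Aug 0, Maj 9), (Min 1, Min 9), (Min 5, Min 9), (Maj 8, Min 9), (Maj 4, Min 9), (Aug 1, Min 9), (Maj 2, Maj 10), (Maj 6, Maj 10), (Min 11, Maj 10), (Min 3, Maj 10), (Aug 1, Maj 10), (Min 2, Min 10), (Min 6, Min 10), (Maj 9, Min 10), (Maj 5, Min 10), (Aug 2, Min 10), (Maj 3, Maj 11), (Maj 7, Maj 11), (Min 0, Maj 11), (Min 4, Maj 11), (Aug 2, Maj 11), (Min 3, Min 11), (Min 7, Min 11), (Maj 10, Min 11), (Maj 6, Min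 11), (Aug 3, Min 11)]"
  unfolding TL_def TL0_def by (simp add: upto.simps[of 0] upto.simps[of 1])

definition HL :: "chord list" where
  "HL = map Maj [0..11] @ map Min [0..11] @ map Aug [0..3]"

lemma HL_lit: "HL = [Maj 0, Maj 1, Maj 2, Maj 3, Maj 4, Maj 5, Maj 6, Maj 7, Maj 8, Maj 9, Maj 10, Maj 11, Min 0, Min 1, Min 2, Min 3, Min 4, Min 5, Min 6, Min 7, Min 8, Min 9, Min 10, Min 11, Aug 0, Aug 1, Aug 2, Aug 3]"
  unfolding HL_def by (simp add: upto.simps[of 0] upto.simps[of 1])

lemma H_eq: "H = set HL"
  unfolding H_def HL_def by auto

definition nb :: "chord \<Rightarrow> chord list" where
 "nb x = (case x of
    Maj n \<Rightarrow> [Maj ((n+4) mod 12), Maj ((n+8) mod 12), Min ((n+1) mod 12), Min ((n+5) mod 12), Aug ((n+3) mod 4)]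
  | Min n \<Rightarrow> [Min ((n+4) mod 12), Min ((n+8) mod 12), Maj ((n+11) mod 12), Maj ((n+7) mod 12), Aug (n mod 4)]
  | Aug a \<Rightarrow> [Maj (a+1), Maj (a+5), Maj ((a+9) mod 12), Min a, Min (a+4), Min (a+8)])"

definition seteq :: "chord list \<Rightarrow> chord list \<Rightarrow> bool" where
  "seteq xs ys = (list_all (\<lambda>y. y \<in> set ys) xs \<and> list_all (\<lambda>y. y \<in> set xs) ys)"

lemma seteq_iff: "seteq xs ys \<longleftrightarrow> set xs = set ys"
  unfolding seteq_def by (auto simp: list_all_iff)

lemma F1: "list_all (\<lambda>x. seteq (map snd (filter (\<lambda>p. fst p = x) TL)) (nb x)) HL"
  unfolding HL_lit list.pred_inject by (simp add: TL_lit nb_def seteq_def)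

lemma T_img: "x \<in> H \<Longrightarrow> T `` {x} = set (nb x)"
  using F1 unfolding T_img0 H_eq list_all_iff seteq_iff by blast

lemma MajH: "0 \<le> m \<Longrightarrow> m < 12 \<Longrightarrow> Maj m \<in> H" unfolding H_def by blast
lemma MinH: "0 \<le> m \<Longrightarrow> m < 12 \<Longrightarrow> Min m \<in> H" unfolding H_def by blast
lemma AugH: "0 \<le> m \<Longrightarrow> m < 4 \<Longrightarrow> Aug m \<in> H" unfolding H_def by blast

lemma T0_sub: "T0 \<subseteq> H \<times> H"
  unfolding T0_def
proof (rule UN_least)
  fix n :: int assume "n \<in> {0..<12}"
  then have n: "0 \<le> n" "n < 12" by auto
  show "{(Maj n, Maj ((n+4) mod 12)), (Maj n, Maj ((n+8) mod 12)),
      (Maj n, Min ((n+1) mod 12)), (Maj n, Min ((n+5) mod 12)),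
      (Maj n, Aug ((n+3) mod 4)),
      (Min n, Min ((n+4) mod 12)), (Min n, Min ((n+8) mod 12)),
      (Min n, Maj ((n+11) mod 12)), (Min n, Maj ((n+7) mod 12)),
      (Min n, Aug (n mod 4))} \<subseteq> H \<times> H"
    using n by (simp add: MajH MinH AugH)
qed

lemma T_sub: "T \<subseteq> H \<times> H"
  using T0_sub unfolding T_def by auto

lemma nb_H: "x \<in> H \<Longrightarrow> set (nb x) \<subseteq> H"
  using T_img[of x] T_sub by blast

lemma hpow_sub: "hpow T k \<subseteq> H \<times> H"
  by (induction k) (use T_sub in auto)

fun img :: "nat \<Rightarrow> chord \<Rightarrow> chord list" where
  "img 0 x = [x]"
| "img (Suc k) x = remdups (concat (map nb (img k x)))"

lemma hpow_img: "x \<in> H \<Longrightarrow> hpow T k `` {x} = set (img k x)"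
proof (induction k)
  case 0 then show ?case by auto
next
  case (Suc k)
  have sub: "set (img k x) \<subseteq> H" using Suc hpow_sub[of k] by blast
  have "hpow T (Suc k) `` {x} = T `` (hpow T k `` {x})" by auto
  also have "\<dots> = T `` set (img k x)" using Suc by simp
  also have "\<dots> = (\<Union>y\<in>set (img k x). T `` {y})" by blast
  also have "\<dots> = (\<Union>y\<in>set (img k x). set (nb y))" using sub T_img by auto
  also have "\<dots> = set (img (Suc k) x)" by simp
  finally show ?case .
qed

lemma rel_eqI:
  assumes "A \<subseteq> H \<times> H" "B \<subseteq> H \<times> H" "\<And>x. x \<in> H \<Longrightarrow> A `` {x} = B `` {x}"
  shows "A = B"
proof (intro set_eqI iffI)
  fix p assume "p \<in> A"
  then show "p \<in> B" using assms by (cases p) blast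
next
  fix p assume "p \<in> B"
  then show "p \<in> A" using assms by (cases p) blast
qed

fun sg :: "chord \<Rightarrow> chord" where
  "sg (Maj n) = Maj ((n+1) mod 12)"
| "sg (Min n) = Min ((n+1) mod 12)"
| "sg (Aug a) = Aug ((a+1) mod 4)"

lemma sg_H: "x \<in> H \<Longrightarrow> sg x \<in> H"
  unfolding H_def by (auto simp: pos_mod_bound pos_mod_sign)

lemma nb_sg_all: "list_all (\<lambda>x. seteq (nb (sg x)) (map sg (nb x))) HL"
  unfolding HL_lit list.pred_inject by (simp add: nb_def seteq_def)

lemma nb_sg: "x \<in> H \<Longrightarrow> set (nb (sg x)) = sg ` set (nb x)"
  using nb_sg_all unfolding H_eq list_all_iff seteq_iff by auto

lemma hpow_sg: "x \<in> H \<Longrightarrow> hpow T k `` {sg x} = sg ` (hpow T k `` {x})"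
proof (induction k)
  case 0 then show ?case using sg_H by auto
next
  case (Suc k)
  have sub: "hpow T k `` {x} \<subseteq> H" using hpow_sub[of k] by blast
  have "hpow T (Suc k) `` {sg x} = T `` (hpow T k `` {sg x})" by auto
  also have "\<dots> = (\<Union>y\<in>hpow T k `` {x}. T `` {sg y})" using Suc by auto
  also have "\<dots> = (\<Union>y\<in>hpow T k `` {x}. sg ` (T `` {y}))"
  proof (rule SUP_cong[OF refl])
    fix y assume "y \<in> hpow T k `` {x}"
    then have yH: "y \<in> H" using sub by blast
    show "T `` {sg y} = sg ` (T `` {y})"
      by (simp add: T_img[OF yH] T_img[OF sg_H[OF yH]] nb_sg[OF yH])
  qed
  also have "\<dots> = sg ` (T `` (hpow T k `` {x}))" by auto
  also have "\<dots> = sg ` (hpow T (Suc k) `` {x})" by auto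
  finally show ?case .
qed

lemma base43:
  "seteq (img 4 (Maj 0)) (img 3 (Maj 0))"
  "seteq (img 4 (Min 0)) (img 3 (Min 0))"
  "seteq (img 4 (Aug 0)) (img 3 (Aug 0))"
  by (simp_all add: nb_def numeral_eq_Suc seteq_def)

lemma sg_pow_Maj: "(sg ^^ k) (Maj 0) = Maj (int k mod 12)"
  by (induction k) (auto simp: mod_simps add.commute)

lemma sg_pow_Min: "(sg ^^ k) (Min 0) = Min (int k mod 12)"
  by (induction k) (auto simp: mod_simps add.commute)

lemma sg_pow_Aug: "(sg ^^ k) (Aug 0) = Aug (int k mod 4)"
  by (induction k) (auto simp: mod_simps add.commute)

lemma reach: "x \<in> H \<Longrightarrow> \<exists>k b. b \<in> {Maj 0, Min 0, Aug 0} \<and> x = (sg ^^ k) b"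
proof -
  assume "x \<in> H"
  then consider n where "x = Maj n" "0 \<le> n" "n < 12" | n where "x = Min n" "0 \<le> n" "n < 12"
    | n where "x = Aug n" "0 \<le> n" "n < 4"
    unfolding H_def by blast
  then show ?thesis
  proof cases
    case 1 then show ?thesis using sg_pow_Maj[of "nat n"] by (intro exI[of _ "nat n"]) auto
  next
    case 2 then show ?thesis using sg_pow_Min[of "nat n"] by (intro exI[of _ "nat n"]) auto
  next
    case 3 then show ?thesis using sg_pow_Aug[of "nat n"] by (intro exI[of _ "nat n"]) auto
  qed
qed

lemma base_H: "b \<in> {Maj 0, Min 0, Aug 0} \<Longrightarrow> b \<in> H"
  unfolding H_def by auto

lemma sg_pow_H: "b \<in> H \<Longrightarrow> (sg ^^ k) b \<in> H"
  by (induction k) (auto simp: sg_H)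

lemma img43_all: "x \<in> H \<Longrightarrow> hpow T 4 `` {x} = hpow T 3 `` {x}"
proof -
  assume "x \<in> H"
  then obtain k b where b: "b \<in> {Maj 0, Min 0, Aug 0}" and x: "x = (sg ^^ k) b"
    using reach by blast
  have "hpow T 4 `` {(sg ^^ k) b} = hpow T 3 `` {(sg ^^ k) b}"
  proof (induction k)
    case 0 then show ?case using b base43 base_H[OF b] by (auto simp: hpow_img seteq_iff)
  next
    case (Suc k)
    have "(sg ^^ k) b \<in> H" using sg_pow_H base_H[OF b] by blast
    then show ?case using Suc by (simp add: hpow_sg del: hpow.simps)
  qed
  then show ?thesis using x by simp
qed

lemma hpow43: "hpow T 4 = hpow T 3"
  by (rule rel_eqI[OF hpow_sub hpow_sub img43_all])

lemma distinct_imgs: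
  "\<not> seteq (img 0 (Maj 0)) (img 1 (Maj 0))"
  "\<not> seteq (img 0 (Maj 0)) (img 2 (Maj 0))"
  "\<not> seteq (img 0 (Maj 0)) (img 3 (Maj 0))"
  "\<not> seteq (img 1 (Maj 0)) (img 2 (Maj 0))"
  "\<not> seteq (img 1 (Maj 0)) (img 3 (Maj 0))"
  "\<not> seteq (img 2 (Maj 0)) (img 3 (Maj 0))"
  by (simp_all add: nb_def numeral_eq_Suc seteq_def)

lemma hpow_distinct: "\<forall>i<4. \<forall>j<4. hpow T i = hpow T j \<longrightarrow> i = j"
proof (intro allI impI)
  fix i j :: nat assume i: "i < 4" and j: "j < 4" and e: "hpow T i = hpow T j"
  have M: "Maj 0 \<in> H" unfolding H_def by auto
  have s: "seteq (img i (Maj 0)) (img j (Maj 0))"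
    using e hpow_img[OF M, of i] hpow_img[OF M, of j] by (simp add: seteq_iff)
  have s2: "seteq (img j (Maj 0)) (img i (Maj 0))"
    using s by (auto simp: seteq_iff)
  have "i = 0 \<or> i = 1 \<or> i = 2 \<or> i = 3" "j = 0 \<or> j = 1 \<or> j = 2 \<or> j = 3" using i j by auto
  then show "i = j" using s s2 distinct_imgs by auto
qed

lemma hpow_add: "hpow T (i + j) = hpow T i O hpow T j"
proof (induction j)
  case 0 then show ?case using hpow_sub[of i] by auto
next
  case (Suc j) then show ?case by (simp add: O_assoc)
qed

lemma hpow_ge3: "k \<ge> 3 \<Longrightarrow> hpow T k = hpow T 3"
proof (induction k rule: dec_induct)
  case base then show ?case by (rule refl)
next
  case (step k)
  have "hpow T (Suc k) = hpow T k O T" by (rule hpow.simps(2))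
  also have "\<dots> = hpow T 3 O T" using step.IH by (rule arg_cong)
  also have "\<dots> = hpow T (Suc 3)" by (rule hpow.simps(2)[symmetric])
  also have "Suc 3 = 4" by simp
  also have "hpow T 4 = hpow T 3" by (rule hpow43)
  finally show ?case .
qed

lemma hpow_in: "hpow T k \<in> hpow T ` {0..<4}"
proof (cases "k < 4")
  case True then show ?thesis by (intro imageI) simp
next
  case False
  then have "hpow T k = hpow T 3" using hpow_ge3[of k] by linarith
  moreover have "hpow T 3 \<in> hpow T ` {0..<4}" by (intro imageI) simp
  ultimately show ?thesis by (rule ssubst)
qed

lemma hpow_gen: "hpow T k \<in> gen_monoid {T}"
proof (induction k)
  case 0 then show ?case by (simp only: hpow.simps gm_id)
next
  case (Suc k)
  have "T \<in> gen_monoid {T}" by (rule gm_gen) simp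
  then show ?case unfolding hpow.simps using Suc by (rule gm_comp[rotated])
qed

lemma T_hpow1: "T = hpow T 1"
proof -
  have "hpow T 1 = Id_on H O T" by (simp only: One_nat_def hpow.simps)
  also have "\<dots> = T" using T_sub by blast
  finally show ?thesis by (rule sym)
qed

lemma gen_eq: "gen_monoid {T} = hpow T ` {0..<4}"
proof
  show "gen_monoid {T} \<subseteq> hpow T ` {0..<4}"
  proof
    fix R assume "R \<in> gen_monoid {T}"
    then show "R \<in> hpow T ` {0..<4}"
    proof (induction rule: gen_monoid.induct)
      case gm_id
      then show ?case using hpow_in[of 0] by simp
    next
      case (gm_gen R)
      then show ?case by (metis T_hpow1 hpow_in singletonD)
    next
      case (gm_comp A B)
      then obtain i j where "A = hpow T i" "B = hpow T j" by blast
      then have "A O B = hpow T (i + j)" by (simp add: hpow_add)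
      then show ?case using hpow_in by simp
    qed
  qed
next
  show "hpow T ` {0..<4} \<subseteq> gen_monoid {T}" using hpow_gen by blast
qed

theorem mainTheorem3:
  shows "T \<subseteq> H \<times> H \<and> sym T
    \<and> gen_monoid {T} = hpow T ` {0..<4}
    \<and> (\<forall>i<4. \<forall>j<4. hpow T i = hpow T j \<longrightarrow> i = j)
    \<and> hpow T 4 = hpow T 3"
proof (intro conjI)
  show "T \<subseteq> H \<times> H" by (rule T_sub)
  show "sym T" unfolding T_def sym_def by auto
qed (rule gen_eq hpow_distinct hpow43)+

end
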